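(* Let $X$ and $Y$ be complex Banach spaces and $\mathcal{A}=L(Y)$ the algebra of bounded linear operators on $Y$. Let $\mathcal{F}=\{F_t\}_{t\ge0}$ be a semigroup of holomorphic self-mappings of a domain $\mathcal{D}\subset X$, and let $\{\Gamma_t\}_{t\ge0}$ be a family of holomorphic maps $\mathcal{D}\to\mathcal{A}$. Then $\{\Gamma_t\}_{t\ge0}$ is a semicocycle over $\mathcal{F}$ if and only if the family $\widetilde{\mathcal F}=\{\widetilde F_t\}_{t\ge0}$, $\widetilde F_t(x,y)=(F_t(x),\Gamma_t(x)y)$, is a semigroup on the domain $\mathcal{D}\times Y$. If, in addition, there are a biholomorphic map $h$ of $\mathcal{D}$ onto $h(\mathcal{D})\subset X$ and a bounded linear operator $A$ on $X$ with $F_t(x)=h^{-1}(e^{tA}h(x))$ for all $t\ge0$, $x\in\mathcal{D}$, and there are a holomorphic $M:\mathcal{D}\to\mathcal{A}_*$ and $B_0\in\mathcal{A}$ with $\Gamma_t(x)=M(F_t(x))^{-1}e^{tB_0}M(x)$ for all $t,x$, then $\widetilde{\mathcal F}$ is linearized by $\widetilde h(x,y)=(h(x),M(x)y)$, i.e. $\widetilde F_t(x,y)=\widetilde h^{-1}\big(e^{tA}h(x),\,e^{tB_0}M(x)y\big)$ for all $t\ge0$, $(x,y)\in\mathcal{D}\times Y$.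
   Context: $\mathcal{A}_*$ denotes the invertible elements of $\mathcal{A}$. A semigroup on a domain $\Omega$ is a family $\{G_t\}_{t\ge0}$ of holomorphic self-maps of $\Omega$ with $G_{t+s}=G_t\circ G_s$ for $t,s\ge0$ and $G_t(w)\to w$ as $t\to0^+$ for each $w\in\Omega$. A semicocycle over $\mathcal{F}$ is a family $\{\Gamma_t\}_{t\ge0}$ of holomorphic maps $\mathcal{D}\to\mathcal{A}$ with $\Gamma_t(F_s(x))\Gamma_s(x)=\Gamma_{t+s}(x)$ for all $t,s\ge0$, $x\in\mathcal{D}$, and $\Gamma_t(x)\to\mathrm{Id}_Y$ as $t\to0^+$ for each $x$. *)

theory Defs
  imports "HOL-Analysis.Analysis"
begin

text \<open>A complex Banach space is encoded as a real Banach space (type class banach)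
together with a complex structure J (multiplication by the imaginary unit):
J is real-linear and bounded, J o J = -id, and the norm is invariant under
multiplication by unimodular scalars e^{i theta}, i.e. (cos theta + i sin theta) x.\<close>

definition complex_structure :: "('a::real_normed_vector \<Rightarrow> 'a) \<Rightarrow> bool" where
  "complex_structure J \<longleftrightarrow> bounded_linear J \<and> (\<forall>x. J (J x) = - x) \<and>
     (\<forall>\<theta> x. norm (cos \<theta> *\<^sub>R x + sin \<theta> *\<^sub>R J x) = norm x)"

definition prod_cs :: "('a \<Rightarrow> 'a) \<Rightarrow> ('b \<Rightarrow> 'b) \<Rightarrow> ('a \<times> 'b \<Rightarrow> 'a \<times> 'b)" where
  "prod_cs JX JY = (\<lambda>(x, y). (JX x, JY y))"

definition op_cs :: "('b::real_normed_vector \<Rightarrow> 'b) \<Rightarrow> ('b \<Rightarrow>\<^sub>L 'b) \<Rightarrow> ('b \<Rightarrow>\<^sub>L 'b)" where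
  "op_cs JY = (\<lambda>T. Blinfun (\<lambda>v. JY (blinfun_apply T v)))"

text \<open>Complex-linear bounded operators on Y, i.e. the elements of the algebra L(Y).\<close>

definition clinear_op :: "('b::real_normed_vector \<Rightarrow> 'b) \<Rightarrow> ('b \<Rightarrow>\<^sub>L 'b) \<Rightarrow> bool" where
  "clinear_op JY T \<longleftrightarrow> (\<forall>v. blinfun_apply T (JY v) = JY (blinfun_apply T v))"

definition cholomorphic_on ::
  "('a::real_normed_vector \<Rightarrow> 'a) \<Rightarrow> ('b::real_normed_vector \<Rightarrow> 'b) \<Rightarrow> ('a \<Rightarrow> 'b) \<Rightarrow> 'a set \<Rightarrow> bool" where
  "cholomorphic_on JA JB f S \<longleftrightarrow>
     (\<forall>x\<in>S. \<exists>L. (f has_derivative L) (at x) \<and> (\<forall>v. L (JA v) = JB (L v)))"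

definition cdomain :: "'a::real_normed_vector set \<Rightarrow> bool" where
  "cdomain D \<longleftrightarrow> open D \<and> connected D \<and> D \<noteq> {}"

definition hsemigroup :: "('a::real_normed_vector \<Rightarrow> 'a) \<Rightarrow> 'a set \<Rightarrow> (real \<Rightarrow> 'a \<Rightarrow> 'a) \<Rightarrow> bool" where
  "hsemigroup J \<Omega> G \<longleftrightarrow>
     (\<forall>t\<ge>0. cholomorphic_on J J (G t) \<Omega> \<and> G t ` \<Omega> \<subseteq> \<Omega>) \<and>
     (\<forall>t\<ge>0. \<forall>s\<ge>0. \<forall>w\<in>\<Omega>. G (t + s) w = G t (G s w)) \<and>
     (\<forall>w\<in>\<Omega>. ((\<lambda>t. G t w) \<longlongrightarrow> w) (at_right 0))"

text \<open>Semicocycle over a semigroup F on D with values in L(Y). The convergence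
Gamma_t(x) \<rightarrow> Id_Y is taken in the strong operator topology.\<close>

definition semicocycle ::
  "'a set \<Rightarrow> (real \<Rightarrow> 'a \<Rightarrow> 'a) \<Rightarrow> (real \<Rightarrow> 'a \<Rightarrow> ('b::real_normed_vector \<Rightarrow>\<^sub>L 'b)) \<Rightarrow> bool" where
  "semicocycle D F \<Gamma> \<longleftrightarrow>
     (\<forall>t\<ge>0. \<forall>s\<ge>0. \<forall>x\<in>D. \<Gamma> t (F s x) o\<^sub>L \<Gamma> s x = \<Gamma> (t + s) x) \<and>
     (\<forall>x\<in>D. \<forall>y. ((\<lambda>t. blinfun_apply (\<Gamma> t x) y) \<longlongrightarrow> y) (at_right 0))"

primrec op_pow :: "('b::real_normed_vector \<Rightarrow>\<^sub>L 'b) \<Rightarrow> nat \<Rightarrow> ('b \<Rightarrow>\<^sub>L 'b)" where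
  "op_pow T 0 = id_blinfun"
| "op_pow T (Suc n) = T o\<^sub>L op_pow T n"

definition op_exp :: "('b::banach \<Rightarrow>\<^sub>L 'b) \<Rightarrow> ('b \<Rightarrow>\<^sub>L 'b)" where
  "op_exp T = (\<Sum>n. (1 / fact n) *\<^sub>R op_pow T n)"

definition op_invertible :: "('b::real_normed_vector \<Rightarrow>\<^sub>L 'b) \<Rightarrow> bool" where
  "op_invertible T \<longleftrightarrow> (\<exists>S. S o\<^sub>L T = id_blinfun \<and> T o\<^sub>L S = id_blinfun)"

definition op_inv :: "('b::real_normed_vector \<Rightarrow>\<^sub>L 'b) \<Rightarrow> ('b \<Rightarrow>\<^sub>L 'b)" where
  "op_inv T = (THE S. S o\<^sub>L T = id_blinfun \<and> T o\<^sub>L S = id_blinfun)"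

definition biholomorphic_onto :: "('a::real_normed_vector \<Rightarrow> 'a) \<Rightarrow> ('a \<Rightarrow> 'a) \<Rightarrow> 'a set \<Rightarrow> bool" where
  "biholomorphic_onto J h D \<longleftrightarrow> cholomorphic_on J J h D \<and> inj_on h D \<and> open (h ` D) \<and>
     cholomorphic_on J J (inv_into D h) (h ` D)"

end

theory Submission
  imports Defs
begin


lemma norm_op_pow: "norm (op_pow T n) \<le> norm T ^ n"
proof (induction n)
  case 0 then show ?case by (simp add: norm_blinfun_id_le)
next
  case (Suc n)
  have "norm (op_pow T (Suc n)) \<le> norm T * norm (op_pow T n)"
    by (simp add: norm_blinfun_compose)
  also have "\<dots> \<le> norm T * norm T ^ n" using Suc by (simp add: mult_left_mono)
  finally show ?case by simp
qed

lemma op_pow_scale: "op_pow (c *\<^sub>R T) n = (c ^ n) *\<^sub>R op_pow T n"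
  by (induction n) (simp_all add: bounded_bilinear.scaleR_left[OF bounded_bilinear_blinfun_compose]
      bounded_bilinear.scaleR_right[OF bounded_bilinear_blinfun_compose])

lemma op_pow_add: "op_pow T i o\<^sub>L op_pow T j = op_pow T (i + j)"
proof (induction i)
  case 0 then show ?case by (auto intro!: blinfun_eqI)
next
  case (Suc i)
  show ?case
  proof (rule blinfun_eqI)
    fix x
    have "blinfun_apply (op_pow T i) (blinfun_apply (op_pow T j) x) = blinfun_apply (op_pow T (i + j)) x"
      using Suc by (metis blinfun_apply_blinfun_compose)
    then show "blinfun_apply (op_pow T (Suc i) o\<^sub>L op_pow T j) x = blinfun_apply (op_pow T (Suc i + j)) x"
      by simp
  qed
qed

lemma compose_sum_product:
  "(\<Sum>i\<in>A. a i) o\<^sub>L (\<Sum>j\<in>B. b j) = (\<Sum>i\<in>A. \<Sum>j\<in>B. a i o\<^sub>L b j)"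
  by (simp add: bounded_bilinear.sum_left[OF bounded_bilinear_blinfun_compose]
      bounded_bilinear.sum_right[OF bounded_bilinear_blinfun_compose]) (rule sum.swap)

lemma Cauchy_product_sums_compose:
  fixes a b :: "nat \<Rightarrow> ('b::banach \<Rightarrow>\<^sub>L 'b)"
  assumes a: "summable (\<lambda>k. norm (a k))"
    and b: "summable (\<lambda>k. norm (b k))"
  shows "(\<lambda>k. \<Sum>i\<le>k. a i o\<^sub>L b (k - i)) sums ((\<Sum>k. a k) o\<^sub>L (\<Sum>k. b k))"
proof -
  let ?S1 = "\<lambda>n::nat. {..<n} \<times> {..<n}"
  let ?S2 = "\<lambda>n::nat. {(i,j). i + j < n}"
  have S1_mono: "\<And>m n. m \<le> n \<Longrightarrow> ?S1 m \<subseteq> ?S1 n" by auto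
  have S2_le_S1: "\<And>n. ?S2 n \<subseteq> ?S1 n" by auto
  have S1_le_S2: "\<And>n. ?S1 (n div 2) \<subseteq> ?S2 n" by auto
  have finite_S1: "\<And>n. finite (?S1 n)" by simp
  with S2_le_S1 have finite_S2: "\<And>n. finite (?S2 n)" by (rule finite_subset)
  let ?g = "\<lambda>(i,j). a i o\<^sub>L b j"
  let ?f = "\<lambda>(i,j). norm (a i) * norm (b j)"
  have f_nonneg: "\<And>x. 0 \<le> ?f x" by auto
  then have norm_sum_f: "\<And>A. norm (sum ?f A) = sum ?f A"
    unfolding real_norm_def
    by (simp only: abs_of_nonneg sum_nonneg [rule_format])
  have "(\<lambda>n. (\<Sum>k<n. a k) o\<^sub>L (\<Sum>k<n. b k)) \<longlonglongrightarrow> ((\<Sum>k. a k) o\<^sub>L (\<Sum>k. b k))"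
    by (intro bounded_bilinear.tendsto[OF bounded_bilinear_blinfun_compose]
        summable_LIMSEQ summable_norm_cancel [OF a] summable_norm_cancel [OF b])
  then have 1: "(\<lambda>n. sum ?g (?S1 n)) \<longlonglongrightarrow> ((\<Sum>k. a k) o\<^sub>L (\<Sum>k. b k))"
    by (simp only: compose_sum_product sum.Sigma [rule_format] finite_lessThan)
  have "(\<lambda>n. (\<Sum>k<n. norm (a k)) * (\<Sum>k<n. norm (b k))) \<longlonglongrightarrow> (\<Sum>k. norm (a k)) * (\<Sum>k. norm (b k))"
    using a b by (intro tendsto_mult summable_LIMSEQ)
  then have "(\<lambda>n. sum ?f (?S1 n)) \<longlonglongrightarrow> (\<Sum>k. norm (a k)) * (\<Sum>k. norm (b k))"
    by (simp only: sum_product sum.Sigma [rule_format] finite_lessThan)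
  then have "convergent (\<lambda>n. sum ?f (?S1 n))"
    by (rule convergentI)
  then have Cauchy: "Cauchy (\<lambda>n. sum ?f (?S1 n))"
    by (rule convergent_Cauchy)
  have "Zfun (\<lambda>n. sum ?f (?S1 n - ?S2 n)) sequentially"
  proof (rule ZfunI, simp only: eventually_sequentially norm_sum_f)
    fix r :: real
    assume r: "0 < r"
    from CauchyD [OF Cauchy r] obtain N
      where "\<forall>m\<ge>N. \<forall>n\<ge>N. norm (sum ?f (?S1 m) - sum ?f (?S1 n)) < r" ..
    then have "\<And>m n. N \<le> n \<Longrightarrow> n \<le> m \<Longrightarrow> norm (sum ?f (?S1 m - ?S1 n)) < r"
      by (simp only: sum_diff finite_S1 S1_mono)
    then have N: "\<And>m n. N \<le> n \<Longrightarrow> n \<le> m \<Longrightarrow> sum ?f (?S1 m - ?S1 n) < r"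
      by (simp only: norm_sum_f)
    show "\<exists>N. \<forall>n\<ge>N. sum ?f (?S1 n - ?S2 n) < r"
    proof (intro exI allI impI)
      fix n
      assume "2 * N \<le> n"
      then have n: "N \<le> n div 2" by simp
      have "sum ?f (?S1 n - ?S2 n) \<le> sum ?f (?S1 n - ?S1 (n div 2))"
        by (intro sum_mono2 finite_Diff finite_S1 f_nonneg Diff_mono subset_refl S1_le_S2)
      also have "\<dots> < r"
        using n div_le_dividend by (rule N)
      finally show "sum ?f (?S1 n - ?S2 n) < r" .
    qed
  qed
  then have "Zfun (\<lambda>n. sum ?g (?S1 n - ?S2 n)) sequentially"
    apply (rule Zfun_le [rule_format])
    apply (simp only: norm_sum_f)
    apply (rule order_trans [OF norm_sum sum_mono])
    apply (auto simp add: norm_blinfun_compose)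
    done
  then have 2: "(\<lambda>n. sum ?g (?S1 n) - sum ?g (?S2 n)) \<longlonglongrightarrow> 0"
    unfolding tendsto_Zfun_iff diff_0_right
    by (simp only: sum_diff finite_S1 S2_le_S1)
  with 1 have "(\<lambda>n. sum ?g (?S2 n)) \<longlonglongrightarrow> ((\<Sum>k. a k) o\<^sub>L (\<Sum>k. b k))"
    by (rule Lim_transform2)
  then show ?thesis
    by (simp only: sums_def sum.triangle_reindex)
qed

lemma exp_term_summable:
  "summable (\<lambda>k. norm ((1 / fact k) *\<^sub>R op_pow (a *\<^sub>R T) k))"
proof (rule summable_comparison_test)
  show "summable (\<lambda>k. inverse (fact k) * (\<bar>a\<bar> * norm T) ^ k)"
    by (rule summable_exp)
  show "\<exists>N. \<forall>n\<ge>N. norm (norm ((1 / fact n) *\<^sub>R op_pow (a *\<^sub>R T) n)) \<le> inverse (fact n) * (\<bar>a\<bar> * norm T) ^ n"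
  proof (intro exI allI impI)
    fix n :: nat
    have "norm (norm ((1 / fact n) *\<^sub>R op_pow (a *\<^sub>R T) n)) = inverse (fact n) * norm (op_pow (a *\<^sub>R T) n)"
      by (simp add: divide_inverse)
    also have "\<dots> \<le> inverse (fact n) * norm (a *\<^sub>R T) ^ n"
      by (intro mult_left_mono norm_op_pow) simp
    also have "\<dots> = inverse (fact n) * (\<bar>a\<bar> * norm T) ^ n" by simp
    finally show "norm (norm ((1 / fact n) *\<^sub>R op_pow (a *\<^sub>R T) n)) \<le> inverse (fact n) * (\<bar>a\<bar> * norm T) ^ n" .
  qed
qed

lemma binom_real:
  fixes a b :: real
  shows "(\<Sum>i\<le>k. (a ^ i / fact i) * (b ^ (k - i) / fact (k - i))) = (a + b) ^ k / fact k"
proof -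
  have "(a + b) ^ k / fact k = (\<Sum>i\<le>k. of_nat (k choose i) * a ^ i * b ^ (k - i)) / fact k"
    by (simp add: binomial_ring)
  also have "\<dots> = (\<Sum>i\<le>k. of_nat (k choose i) * a ^ i * b ^ (k - i) / fact k)"
    by (simp add: sum_divide_distrib)
  also have "\<dots> = (\<Sum>i\<le>k. (a ^ i / fact i) * (b ^ (k - i) / fact (k - i)))"
  proof (rule sum.cong)
    fix i assume "i \<in> {..k}"
    then have "i \<le> k" by simp
    then show "of_nat (k choose i) * a ^ i * b ^ (k - i) / fact k = (a ^ i / fact i) * (b ^ (k - i) / fact (k - i))"
      by (simp add: binomial_fact field_simps)
  qed simp
  finally show ?thesis by simp
qed

lemma op_exp_add: "op_exp (a *\<^sub>R T) o\<^sub>L op_exp (b *\<^sub>R T) = op_exp ((a + b) *\<^sub>R T)"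
proof -
  have "(\<lambda>k. \<Sum>i\<le>k. ((1 / fact i) *\<^sub>R op_pow (a *\<^sub>R T) i) o\<^sub>L ((1 / fact (k - i)) *\<^sub>R op_pow (b *\<^sub>R T) (k - i)))
     sums (op_exp (a *\<^sub>R T) o\<^sub>L op_exp (b *\<^sub>R T))"
    unfolding op_exp_def by (intro Cauchy_product_sums_compose exp_term_summable)
  moreover have "(\<Sum>i\<le>k. ((1 / fact i) *\<^sub>R op_pow (a *\<^sub>R T) i) o\<^sub>L ((1 / fact (k - i)) *\<^sub>R op_pow (b *\<^sub>R T) (k - i)))
       = (1 / fact k) *\<^sub>R op_pow ((a + b) *\<^sub>R T) k" for k
  proof -
    have "(\<Sum>i\<le>k. ((1 / fact i) *\<^sub>R op_pow (a *\<^sub>R T) i) o\<^sub>L ((1 / fact (k - i)) *\<^sub>R op_pow (b *\<^sub>R T) (k - i)))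
       = (\<Sum>i\<le>k. ((a ^ i / fact i) * (b ^ (k - i) / fact (k - i))) *\<^sub>R op_pow T k)"
    proof (rule sum.cong)
      fix i assume "i \<in> {..k}"
      then have "i + (k - i) = k" by simp
      then show "((1 / fact i) *\<^sub>R op_pow (a *\<^sub>R T) i) o\<^sub>L ((1 / fact (k - i)) *\<^sub>R op_pow (b *\<^sub>R T) (k - i))
          = ((a ^ i / fact i) * (b ^ (k - i) / fact (k - i))) *\<^sub>R op_pow T k"
        by (simp add: op_pow_scale bounded_bilinear.scaleR_left[OF bounded_bilinear_blinfun_compose]
            bounded_bilinear.scaleR_right[OF bounded_bilinear_blinfun_compose] op_pow_add mult_ac)
    qed simp
    also have "\<dots> = ((a + b) ^ k / fact k) *\<^sub>R op_pow T k"
      unfolding scaleR_sum_left[symmetric] binom_real ..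
    also have "\<dots> = (1 / fact k) *\<^sub>R op_pow ((a + b) *\<^sub>R T) k"
      by (simp add: op_pow_scale)
    finally show ?thesis .
  qed
  ultimately have "(\<lambda>k. (1 / fact k) *\<^sub>R op_pow ((a + b) *\<^sub>R T) k) sums (op_exp (a *\<^sub>R T) o\<^sub>L op_exp (b *\<^sub>R T))"
    by simp
  then show ?thesis unfolding op_exp_def by (simp add: sums_iff)
qed

lemma op_exp_zero: "op_exp 0 = id_blinfun"
proof -
  have "(\<lambda>n. (1 / fact n) *\<^sub>R op_pow (0::'a \<Rightarrow>\<^sub>L 'a) n) = (\<lambda>n. if n = 0 then id_blinfun else 0)"
    by (rule ext, case_tac n) auto
  moreover have "(\<lambda>n. if n = 0 then id_blinfun else 0) sums (id_blinfun :: 'a \<Rightarrow>\<^sub>L 'a)"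
    using sums_single[of 0 "\<lambda>_. id_blinfun :: 'a \<Rightarrow>\<^sub>L 'a"] by simp
  ultimately show ?thesis unfolding op_exp_def by (simp add: sums_iff)
qed

lemma op_exp_inv: "blinfun_apply (op_exp ((- s) *\<^sub>R T)) (blinfun_apply (op_exp (s *\<^sub>R T)) v) = v"
proof -
  have "op_exp ((- s) *\<^sub>R T) o\<^sub>L op_exp (s *\<^sub>R T) = id_blinfun"
    using op_exp_add[of "- s" T s] by (simp add: op_exp_zero)
  then show ?thesis by (metis blinfun_apply_blinfun_compose blinfun_apply_id_blinfun id_apply)
qed



lemma op_cs_apply:
  assumes "complex_structure JY"
  shows "blinfun_apply (op_cs JY T) v = JY (blinfun_apply T v)"
proof -
  have "bounded_linear JY" using assms by (simp add: complex_structure_def)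
  then have "bounded_linear (\<lambda>v. JY (blinfun_apply T v))"
    using bounded_linear_compose[of JY "blinfun_apply T"] blinfun.bounded_linear_right by blast
  then show ?thesis unfolding op_cs_def by (simp add: bounded_linear_Blinfun_apply)
qed

lemma prod_holo:
  fixes JX :: "'a::real_normed_vector \<Rightarrow> 'a" and JY :: "'b::real_normed_vector \<Rightarrow> 'b"
    and f :: "'a \<Rightarrow> 'a" and g :: "'a \<Rightarrow> ('b \<Rightarrow>\<^sub>L 'b)"
  assumes csY: "complex_structure JY"
    and hf: "cholomorphic_on JX JX f D"
    and hg: "cholomorphic_on JX (op_cs JY) g D"
    and lin: "\<forall>x\<in>D. clinear_op JY (g x)"
  shows "cholomorphic_on (prod_cs JX JY) (prod_cs JX JY) (\<lambda>(x, y). (f x, blinfun_apply (g x) y)) (D \<times> UNIV)"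
  unfolding cholomorphic_on_def
proof
  fix p assume "p \<in> D \<times> (UNIV :: 'b set)"
  then obtain x y where p: "p = (x, y)" and x: "x \<in> D" by auto
  from hf x obtain Lf where Lf: "(f has_derivative Lf) (at x)" "\<forall>v. Lf (JX v) = JX (Lf v)"
    unfolding cholomorphic_on_def by blast
  from hg x obtain Lg where Lg: "(g has_derivative Lg) (at x)" "\<forall>v. Lg (JX v) = op_cs JY (Lg v)"
    unfolding cholomorphic_on_def by blast
  have bl: "bounded_linear JY" using csY by (simp add: complex_structure_def)
  have eq: "(\<lambda>(x, y). (f x, blinfun_apply (g x) y)) = (\<lambda>q. (f (fst q), blinfun_apply (g (fst q)) (snd q)))"
    by (simp add: split_def)
  have dfst: "((\<lambda>q. fst q) has_derivative (\<lambda>q. fst q)) (at (x, y))"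
    by (rule has_derivative_fst[OF has_derivative_ident])
  have dsnd: "((\<lambda>q. snd q) has_derivative (\<lambda>q. snd q)) (at (x, y))"
    by (rule has_derivative_snd[OF has_derivative_ident])
  have d1: "((\<lambda>q. f (fst q)) has_derivative (\<lambda>q. Lf (fst q))) (at (x, y))"
    using has_derivative_compose[OF dfst] Lf(1) by simp
  have d2: "((\<lambda>q. g (fst q)) has_derivative (\<lambda>q. Lg (fst q))) (at (x, y))"
    using has_derivative_compose[OF dfst] Lg(1) by simp
  have d4: "((\<lambda>q. blinfun_apply (g (fst q)) (snd q)) has_derivative
      (\<lambda>q. blinfun_apply (g x) (snd q) + blinfun_apply (Lg (fst q)) y)) (at (x, y))"
    using bounded_bilinear.FDERIV[OF bounded_bilinear_blinfun_apply d2 dsnd] by simp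
  let ?L = "\<lambda>q. (Lf (fst q), blinfun_apply (g x) (snd q) + blinfun_apply (Lg (fst q)) y)"
  have "((\<lambda>(x, y). (f x, blinfun_apply (g x) y)) has_derivative ?L) (at p)"
    unfolding eq p by (rule has_derivative_Pair[OF d1 d4])
  moreover have "\<forall>v. ?L (prod_cs JX JY v) = prod_cs JX JY (?L v)"
  proof
    fix v :: "'a \<times> 'b"
    obtain a b where v: "v = (a, b)" by (cases v)
    have "blinfun_apply (g x) (JY b) = JY (blinfun_apply (g x) b)"
      using lin x by (simp add: clinear_op_def)
    moreover have "blinfun_apply (Lg (JX a)) y = JY (blinfun_apply (Lg a) y)"
      using Lg(2) op_cs_apply[OF csY] by simp
    ultimately show "?L (prod_cs JX JY v) = prod_cs JX JY (?L v)"
      using Lf(2) by (simp add: v prod_cs_def linear_add[OF bounded_linear.linear[OF bl]])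
  qed
  ultimately show "\<exists>L. ((\<lambda>(x, y). (f x, blinfun_apply (g x) y)) has_derivative L) (at p) \<and>
      (\<forall>v. L (prod_cs JX JY v) = prod_cs JX JY (L v))" by blast
qed

lemma part1:
  fixes JX :: "'x::banach \<Rightarrow> 'x" and JY :: "'y::banach \<Rightarrow> 'y"
    and D :: "'x set"
    and F :: "real \<Rightarrow> 'x \<Rightarrow> 'x"
    and \<Gamma> :: "real \<Rightarrow> 'x \<Rightarrow> ('y \<Rightarrow>\<^sub>L 'y)"
  assumes csY: "complex_structure JY"
    and sg: "hsemigroup JX D F"
    and hol: "\<forall>t\<ge>0. cholomorphic_on JX (op_cs JY) (\<Gamma> t) D"
    and val: "\<forall>t\<ge>0. \<forall>x\<in>D. clinear_op JY (\<Gamma> t x)"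
  shows "semicocycle D F \<Gamma> \<longleftrightarrow>
            hsemigroup (prod_cs JX JY) (D \<times> UNIV)
              (\<lambda>t (x, y). (F t x, blinfun_apply (\<Gamma> t x) y))"
proof -
  have H: "\<forall>t\<ge>0. cholomorphic_on (prod_cs JX JY) (prod_cs JX JY) (\<lambda>(x, y). (F t x, blinfun_apply (\<Gamma> t x) y)) (D \<times> UNIV)
      \<and> (\<lambda>(x, y). (F t x, blinfun_apply (\<Gamma> t x) y)) ` (D \<times> UNIV) \<subseteq> D \<times> UNIV"
  proof (intro allI impI conjI)
    fix t :: real assume t: "t \<ge> 0"
    show "cholomorphic_on (prod_cs JX JY) (prod_cs JX JY) (\<lambda>(x, y). (F t x, blinfun_apply (\<Gamma> t x) y)) (D \<times> UNIV)"
      using prod_holo[OF csY, of JX "F t" D "\<Gamma> t"] sg hol val t by (simp add: hsemigroup_def)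
    show "(\<lambda>(x, y). (F t x, blinfun_apply (\<Gamma> t x) y)) ` (D \<times> UNIV) \<subseteq> D \<times> UNIV"
      using sg t by (auto simp: hsemigroup_def)
  qed
  have law: "\<forall>t\<ge>0. \<forall>s\<ge>0. \<forall>x\<in>D. F (t + s) x = F t (F s x)"
    and lim: "\<forall>x\<in>D. ((\<lambda>t. F t x) \<longlongrightarrow> x) (at_right 0)"
    and maps: "\<forall>t\<ge>0. F t ` D \<subseteq> D"
    using sg by (auto simp: hsemigroup_def)
  show ?thesis
  proof
    assume sc: "semicocycle D F \<Gamma>"
    show "hsemigroup (prod_cs JX JY) (D \<times> UNIV) (\<lambda>t (x, y). (F t x, blinfun_apply (\<Gamma> t x) y))"
      unfolding hsemigroup_def
    proof (intro conjI)
      show "\<forall>t\<ge>0. cholomorphic_on (prod_cs JX JY) (prod_cs JX JY) ((\<lambda>t (x, y). (F t x, blinfun_apply (\<Gamma> t x) y)) t) (D \<times> UNIV) \<and>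
          (\<lambda>t (x, y). (F t x, blinfun_apply (\<Gamma> t x) y)) t ` (D \<times> UNIV) \<subseteq> D \<times> UNIV"
        using H by simp
      show "\<forall>t\<ge>0. \<forall>s\<ge>0. \<forall>w\<in>D \<times> UNIV. (\<lambda>t (x, y). (F t x, blinfun_apply (\<Gamma> t x) y)) (t + s) w =
          (\<lambda>t (x, y). (F t x, blinfun_apply (\<Gamma> t x) y)) t ((\<lambda>t (x, y). (F t x, blinfun_apply (\<Gamma> t x) y)) s w)"
      proof (intro allI impI ballI)
        fix t s :: real and w :: "'x \<times> 'y"
        assume t: "t \<ge> 0" and s: "s \<ge> 0" and w: "w \<in> D \<times> UNIV"
        obtain x y where wxy: "w = (x, y)" and x: "x \<in> D" using w by auto
        have "\<Gamma> t (F s x) o\<^sub>L \<Gamma> s x = \<Gamma> (t + s) x" using sc t s x by (simp add: semicocycle_def)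
        then have "blinfun_apply (\<Gamma> (t + s) x) y = blinfun_apply (\<Gamma> t (F s x)) (blinfun_apply (\<Gamma> s x) y)"
          by (metis blinfun_apply_blinfun_compose)
        then show "(\<lambda>t (x, y). (F t x, blinfun_apply (\<Gamma> t x) y)) (t + s) w =
          (\<lambda>t (x, y). (F t x, blinfun_apply (\<Gamma> t x) y)) t ((\<lambda>t (x, y). (F t x, blinfun_apply (\<Gamma> t x) y)) s w)"
          using law t s x by (simp add: wxy)
      qed
      show "\<forall>w\<in>D \<times> UNIV. ((\<lambda>t. (\<lambda>t (x, y). (F t x, blinfun_apply (\<Gamma> t x) y)) t w) \<longlongrightarrow> w) (at_right 0)"
      proof
        fix w :: "'x \<times> 'y" assume w: "w \<in> D \<times> UNIV"
        obtain x y where wxy: "w = (x, y)" and x: "x \<in> D" using w by auto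
        have "((\<lambda>t. blinfun_apply (\<Gamma> t x) y) \<longlongrightarrow> y) (at_right 0)"
          using sc x by (simp add: semicocycle_def)
        then show "((\<lambda>t. (\<lambda>t (x, y). (F t x, blinfun_apply (\<Gamma> t x) y)) t w) \<longlongrightarrow> w) (at_right 0)"
          using lim x by (simp add: wxy tendsto_Pair)
      qed
    qed
  next
    assume hs: "hsemigroup (prod_cs JX JY) (D \<times> UNIV) (\<lambda>t (x, y). (F t x, blinfun_apply (\<Gamma> t x) y))"
    show "semicocycle D F \<Gamma>"
      unfolding semicocycle_def
    proof (intro conjI allI impI ballI)
      fix t s :: real and x assume t: "t \<ge> 0" and s: "s \<ge> 0" and x: "x \<in> D"
      show "\<Gamma> t (F s x) o\<^sub>L \<Gamma> s x = \<Gamma> (t + s) x"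
      proof (rule blinfun_eqI)
        fix y :: 'y
        have "(x, y) \<in> D \<times> UNIV" using x by simp
        then have "(\<lambda>t (x, y). (F t x, blinfun_apply (\<Gamma> t x) y)) (t + s) (x, y) =
          (\<lambda>t (x, y). (F t x, blinfun_apply (\<Gamma> t x) y)) t ((\<lambda>t (x, y). (F t x, blinfun_apply (\<Gamma> t x) y)) s (x, y))"
          using hs t s unfolding hsemigroup_def by blast
        then show "blinfun_apply (\<Gamma> t (F s x) o\<^sub>L \<Gamma> s x) y = blinfun_apply (\<Gamma> (t + s) x) y"
          by simp
      qed
    next
      fix x and y :: 'y assume x: "x \<in> D"
      have "(x, y) \<in> D \<times> UNIV" using x by simp
      then have "((\<lambda>t. (\<lambda>t (x, y). (F t x, blinfun_apply (\<Gamma> t x) y)) t (x, y)) \<longlongrightarrow> (x, y)) (at_right 0)"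
        using hs unfolding hsemigroup_def by blast
      then have "((\<lambda>t. snd ((\<lambda>t (x, y). (F t x, blinfun_apply (\<Gamma> t x) y)) t (x, y))) \<longlongrightarrow> snd (x, y)) (at_right 0)"
        by (rule tendsto_snd)
      then show "((\<lambda>t. blinfun_apply (\<Gamma> t x) y) \<longlongrightarrow> y) (at_right 0)" by simp
    qed
  qed
qed



lemma holo_cont: "cholomorphic_on J1 J2 f S \<Longrightarrow> continuous_on S f"
  unfolding cholomorphic_on_def
  by (auto intro!: continuous_at_imp_continuous_on dest: has_derivative_continuous)

lemma flow_in_range:
  fixes JX :: "'x::banach \<Rightarrow> 'x" and h :: "'x \<Rightarrow> 'x" and A :: "'x \<Rightarrow>\<^sub>L 'x"
    and F :: "real \<Rightarrow> 'x \<Rightarrow> 'x" and D :: "'x set"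
  assumes dom: "cdomain D" and sg: "hsemigroup JX D F" and bh: "biholomorphic_onto JX h D"
    and Fdef: "\<forall>t\<ge>0. \<forall>x\<in>D. F t x = inv_into D h (blinfun_apply (op_exp (t *\<^sub>R A)) (h x))"
  shows "\<forall>t\<ge>0. \<forall>x\<in>D. blinfun_apply (op_exp (t *\<^sub>R A)) (h x) \<in> h ` D"
proof -
  define E where "E = (\<lambda>t v. blinfun_apply (op_exp (t *\<^sub>R A)) v)"
  have hcont: "continuous_on D h" and inj: "inj_on h D" and hopen: "open (h ` D)"
    using bh by (auto simp: biholomorphic_onto_def intro: holo_cont)
  have Fcont: "\<And>t. t \<ge> 0 \<Longrightarrow> continuous_on D (F t)"
    and maps: "\<And>t. t \<ge> 0 \<Longrightarrow> F t ` D \<subseteq> D"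
    and law: "\<And>t s x. t \<ge> 0 \<Longrightarrow> s \<ge> 0 \<Longrightarrow> x \<in> D \<Longrightarrow> F (t + s) x = F t (F s x)"
    and lim: "\<And>x. x \<in> D \<Longrightarrow> ((\<lambda>t. F t x) \<longlongrightarrow> x) (at_right 0)"
    using sg by (auto simp: hsemigroup_def intro: holo_cont)
  have Dopen: "open D" and Dconn: "connected D" and Dne: "D \<noteq> {}"
    using dom by (auto simp: cdomain_def)
  have Einv: "\<And>s v. E (- s) (E s v) = v" unfolding E_def by (rule op_exp_inv)
  have E0: "\<And>v. E 0 v = v" unfolding E_def by (simp add: op_exp_zero)
  have Econt: "\<And>t. continuous_on UNIV (E t)"
    unfolding E_def by (rule linear_continuous_on[OF blinfun.bounded_linear_right])
  have Fd: "\<And>t x. t \<ge> 0 \<Longrightarrow> x \<in> D \<Longrightarrow> F t x = inv_into D h (E t (h x))"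
    using Fdef unfolding E_def by blast
  show ?thesis
  proof (cases "\<forall>v::'x. v = 0")
    case True
    then show ?thesis using Dne by (metis image_eqI)
  next
    case False
    then obtain v0 :: 'x where v0: "v0 \<noteq> 0" by blast
    obtain c where c: "c \<in> D" using Dne by blast
    obtain e where e: "e > 0" "ball c e \<subseteq> D" using Dopen c open_contains_ball by blast
    define d where "d = c + (e / 2 / norm v0) *\<^sub>R v0"
    have "dist c d = e / 2" using v0 e by (simp add: d_def dist_norm)
    then have d: "d \<in> D" "d \<noteq> c" using e by auto
    have stepA: "\<forall>x\<in>D. F t x = (SOME w. False)"
      if t: "t \<ge> 0" and bad: "\<exists>x\<in>D. E t (h x) \<notin> h ` D" for t
    proof -
      define U where "U = D \<inter> (\<lambda>x. E t (h x)) -` (h ` D)"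
      define V where "V = D \<inter> (\<lambda>x. h (F t x) - E t (h x)) -` (- {0})"
      have c1: "continuous_on D (\<lambda>x. E t (h x))"
        by (rule continuous_on_compose2[OF Econt hcont]) simp
      have c2: "continuous_on D (\<lambda>x. h (F t x))"
        by (rule continuous_on_compose2[OF hcont Fcont[OF t] maps[OF t]])
      have oU: "open U" unfolding U_def by (rule continuous_open_preimage[OF c1 Dopen hopen])
      have oV: "open V" unfolding V_def
        by (rule continuous_open_preimage[OF continuous_on_diff[OF c2 c1] Dopen]) (simp add: open_Compl)
      have cover: "D \<subseteq> U \<union> V"
      proof
        fix x assume x: "x \<in> D"
        show "x \<in> U \<union> V"
        proof (cases "E t (h x) \<in> h ` D")
          case True then show ?thesis using x by (simp add: U_def)
        next
          case False
          have "F t x \<in> D" using maps[OF t] x by blast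
          then have "h (F t x) \<in> h ` D" by (rule imageI)
          then have "h (F t x) \<noteq> E t (h x)" using False by force
          then show ?thesis using x by (simp add: V_def)
        qed
      qed
      have disj: "U \<inter> V \<inter> D = {}"
      proof -
        have "h (F t x) = E t (h x)" if "x \<in> U" for x
          using that unfolding U_def by (simp add: Fd[OF t] f_inv_into_f)
        then show ?thesis unfolding V_def by auto
      qed
      from connectedD[OF Dconn oU oV disj cover] have "U \<inter> D = {} \<or> V \<inter> D = {}" .
      moreover obtain x0 where x0: "x0 \<in> D" "E t (h x0) \<notin> h ` D" using bad by blast
      moreover have "x0 \<in> V"
      proof -
        have "F t x0 \<in> D" using maps[OF t] x0 by blast
        then have "h (F t x0) \<in> h ` D" by (rule imageI)
          then have "h (F t x0) \<noteq> E t (h x0)" using x0 by force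
        then show ?thesis using x0 by (simp add: V_def)
      qed
      ultimately have Uempty: "U \<inter> D = {}" by blast
      show ?thesis
      proof
        fix x assume x: "x \<in> D"
        then have nx: "E t (h x) \<notin> h ` D" using Uempty unfolding U_def by blast
        have "(\<lambda>w. w \<in> D \<and> h w = E t (h x)) = (\<lambda>w. False)"
        proof (rule ext)
          fix w
          show "(w \<in> D \<and> h w = E t (h x)) = False"
          proof
            assume w: "w \<in> D \<and> h w = E t (h x)"
            then have "h w \<in> h ` D" by (intro imageI) simp
            then show False using w nx by simp
          qed simp
        qed
        then show "F t x = (SOME w. False)" using Fd[OF t x] by (simp add: inv_into_def)
      qed
    qed
    have stepB: "h (F t x) = E t (h x)"
      if t: "t \<ge> 0" and good: "\<forall>x\<in>D. E t (h x) \<in> h ` D" and x: "x \<in> D" for t x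
      using good x by (simp add: Fd[OF t x] f_inv_into_f)
    show ?thesis
    proof (rule ccontr)
      assume "\<not> ?thesis"
      then obtain t0 x0 where t0: "t0 \<ge> 0" and x0: "x0 \<in> D" and nx0: "E t0 (h x0) \<notin> h ` D"
        unfolding E_def by blast
      define S where "S = (\<lambda>r. \<exists>c. \<forall>x\<in>D. F r x = c)"
      have St0: "S t0" using stepA[OF t0] x0 nx0 unfolding S_def by blast
      have "t0 \<noteq> 0" using nx0 x0 E0 by auto
      with t0 have t0pos: "t0 > 0" by simp
      have "\<exists>k. S (t0 / 2 ^ k) \<and> \<not> S (t0 / 2 ^ Suc k)"
      proof (rule ccontr)
        assume "\<not> ?thesis"
        then have step: "\<And>k. S (t0 / 2 ^ k) \<Longrightarrow> S (t0 / 2 ^ Suc k)" by blast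
        have allS: "S (t0 / 2 ^ k)" for k
          by (induction k) (use St0 step in auto)
        have tl: "filterlim (\<lambda>k::nat. t0 / 2 ^ k) (at_right 0) sequentially"
          unfolding filterlim_at
          using LIMSEQ_divide_realpow_zero[of 2 t0] t0pos by simp
        have limk: "(\<lambda>k. F (t0 / 2 ^ k) p) \<longlonglongrightarrow> p" if "p \<in> D" for p
          using filterlim_compose[OF lim[OF that] tl] by simp
        have "F (t0 / 2 ^ k) d = F (t0 / 2 ^ k) c" for k
        proof -
          from allS[of k] obtain cc where "\<forall>x\<in>D. F (t0 / 2 ^ k) x = cc" unfolding S_def by blast
          then show ?thesis using d c by simp
        qed
        then have "d = c" using LIMSEQ_unique[OF limk[OF d(1)]] limk[OF c] by simp
        then show False using d by simp
      qed
      then obtain k where Sr: "S (t0 / 2 ^ k)" and nSs: "\<not> S (t0 / 2 ^ Suc k)" by blast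
      define s where "s = t0 / 2 ^ Suc k"
      have s0: "s \<ge> 0" using t0 by (simp add: s_def)
      have rs: "t0 / 2 ^ k = s + s" by (simp add: s_def)
      have good: "\<forall>x\<in>D. E s (h x) \<in> h ` D"
        using stepA[OF s0] nSs unfolding S_def s_def by blast
      obtain cc where cc: "\<forall>x\<in>D. F (s + s) x = cc" using Sr rs unfolding S_def by auto
      have key: "h x = E (- s) (E (- s) (h cc))" if x: "x \<in> D" for x
      proof -
        have Fx: "F s x \<in> D" using maps[OF s0] x by blast
        have "h cc = h (F s (F s x))" using cc law[OF s0 s0 x] x by simp
        also have "\<dots> = E s (h (F s x))" using stepB[OF s0 good Fx] .
        also have "\<dots> = E s (E s (h x))" using stepB[OF s0 good x] by simp
        finally show ?thesis using Einv by simp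
      qed
      have "h d = h c" using key[OF d(1)] key[OF c] by simp
      then have "d = c" using inj d(1) c by (simp add: inj_on_def)
      then show False using d by simp
    qed
  qed
qed



lemma op_inv_props:
  assumes "op_invertible T"
  shows "blinfun_apply T (blinfun_apply (op_inv T) v) = v" and "inj (blinfun_apply T)"
proof -
  obtain S where S1: "S o\<^sub>L T = id_blinfun" and S2: "T o\<^sub>L S = id_blinfun"
    using assms unfolding op_invertible_def by blast
  have a1: "blinfun_apply S (blinfun_apply T y) = y" for y
    using S1 by (metis blinfun_apply_blinfun_compose blinfun_apply_id_blinfun id_apply)
  have a2: "blinfun_apply T (blinfun_apply S y) = y" for y
    using S2 by (metis blinfun_apply_blinfun_compose blinfun_apply_id_blinfun id_apply)
  have "op_inv T = S"
    unfolding op_inv_def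
  proof (rule the_equality)
    show "S o\<^sub>L T = id_blinfun \<and> T o\<^sub>L S = id_blinfun" using S1 S2 by simp
  next
    fix S' assume S': "S' o\<^sub>L T = id_blinfun \<and> T o\<^sub>L S' = id_blinfun"
    show "S' = S"
    proof (rule blinfun_eqI)
      fix y
      have "blinfun_apply S' (blinfun_apply T z) = z" for z
        using S' by (metis blinfun_apply_blinfun_compose blinfun_apply_id_blinfun id_apply)
      then have "blinfun_apply S' (blinfun_apply T (blinfun_apply S y)) = blinfun_apply S y" .
      then show "blinfun_apply S' y = blinfun_apply S y" using a2 by simp
    qed
  qed
  then show "blinfun_apply T (blinfun_apply (op_inv T) v) = v" using a2 by simp
  show "inj (blinfun_apply T)" by (metis a1 injI)
qed

theorem proposition3p3:
  fixes JX :: "'x::banach \<Rightarrow> 'x" and JY :: "'y::banach \<Rightarrow> 'y"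
    and D :: "'x set"
    and F :: "real \<Rightarrow> 'x \<Rightarrow> 'x"
    and \<Gamma> :: "real \<Rightarrow> 'x \<Rightarrow> ('y \<Rightarrow>\<^sub>L 'y)"
  assumes csX: "complex_structure JX" and csY: "complex_structure JY"
    and dom: "cdomain D"
    and sg: "hsemigroup JX D F"
    and hol: "\<forall>t\<ge>0. cholomorphic_on JX (op_cs JY) (\<Gamma> t) D"
    and val: "\<forall>t\<ge>0. \<forall>x\<in>D. clinear_op JY (\<Gamma> t x)"
  shows "(semicocycle D F \<Gamma> \<longleftrightarrow>
            hsemigroup (prod_cs JX JY) (D \<times> UNIV)
              (\<lambda>t (x, y). (F t x, blinfun_apply (\<Gamma> t x) y)))
       \<and> (\<forall>h A M B0.
            biholomorphic_onto JX h D \<and>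
            clinear_op JX A \<and>
            (\<forall>t\<ge>0. \<forall>x\<in>D. F t x = inv_into D h (blinfun_apply (op_exp (t *\<^sub>R A)) (h x))) \<and>
            cholomorphic_on JX (op_cs JY) M D \<and>
            (\<forall>x\<in>D. clinear_op JY (M x) \<and> op_invertible (M x)) \<and>
            clinear_op JY B0 \<and>
            (\<forall>t\<ge>0. \<forall>x\<in>D. \<Gamma> t x = op_inv (M (F t x)) o\<^sub>L op_exp (t *\<^sub>R B0) o\<^sub>L M x)
          \<longrightarrow> (\<forall>t\<ge>0. \<forall>x\<in>D. \<forall>y.
                (F t x, blinfun_apply (\<Gamma> t x) y) =
                inv_into (D \<times> UNIV) (\<lambda>(x', y'). (h x', blinfun_apply (M x') y'))
                  (blinfun_apply (op_exp (t *\<^sub>R A)) (h x),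
                   blinfun_apply (op_exp (t *\<^sub>R B0) o\<^sub>L M x) y)))"
proof (intro conjI allI impI ballI)
  show "semicocycle D F \<Gamma> \<longleftrightarrow>
            hsemigroup (prod_cs JX JY) (D \<times> UNIV)
              (\<lambda>t (x, y). (F t x, blinfun_apply (\<Gamma> t x) y))"
    by (rule part1[OF csY sg hol val])
next
  fix h A M B0 and t :: real and x and y :: 'y
  assume H: "biholomorphic_onto JX h D \<and>
            clinear_op JX A \<and>
            (\<forall>t\<ge>0. \<forall>x\<in>D. F t x = inv_into D h (blinfun_apply (op_exp (t *\<^sub>R A)) (h x))) \<and>
            cholomorphic_on JX (op_cs JY) M D \<and>
            (\<forall>x\<in>D. clinear_op JY (M x) \<and> op_invertible (M x)) \<and>
            clinear_op JY B0 \<and>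
            (\<forall>t\<ge>0. \<forall>x\<in>D. \<Gamma> t x = op_inv (M (F t x)) o\<^sub>L op_exp (t *\<^sub>R B0) o\<^sub>L M x)"
    and t: "t \<ge> 0" and x: "x \<in> D"
  have bh: "biholomorphic_onto JX h D" using H by blast
  have Fdef: "\<forall>t\<ge>0. \<forall>x\<in>D. F t x = inv_into D h (blinfun_apply (op_exp (t *\<^sub>R A)) (h x))"
    using H by blast
  have Minv: "\<forall>x\<in>D. op_invertible (M x)" using H by blast
  have Gdef: "\<Gamma> t x = op_inv (M (F t x)) o\<^sub>L op_exp (t *\<^sub>R B0) o\<^sub>L M x" using H t x by blast
  have inj: "inj_on h D" using bh by (simp add: biholomorphic_onto_def)
  have inr: "blinfun_apply (op_exp (t *\<^sub>R A)) (h x) \<in> h ` D"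
    using flow_in_range[OF dom sg bh Fdef] t x by blast
  have hF: "h (F t x) = blinfun_apply (op_exp (t *\<^sub>R A)) (h x)"
    using Fdef t x inr by (simp add: f_inv_into_f)
  have FxD: "F t x \<in> D" using sg t x by (auto simp: hsemigroup_def)
  have injt: "inj_on (\<lambda>(x', y'). (h x', blinfun_apply (M x') y')) (D \<times> (UNIV :: 'y set))"
  proof (rule inj_onI)
    fix p q assume p: "p \<in> D \<times> (UNIV :: 'y set)" and q: "q \<in> D \<times> (UNIV :: 'y set)"
      and eq: "(\<lambda>(x', y'). (h x', blinfun_apply (M x') y')) p = (\<lambda>(x', y'). (h x', blinfun_apply (M x') y')) q"
    obtain a b where pab: "p = (a, b)" and a: "a \<in> D" using p by auto
    obtain a' b' where qab: "q = (a', b')" and a': "a' \<in> D" using q by auto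
    have "h a = h a'" using eq pab qab by simp
    then have aa: "a = a'" using inj a a' by (simp add: inj_on_def)
    have "blinfun_apply (M a) b = blinfun_apply (M a) b'" using eq pab qab aa by simp
    moreover have "inj (blinfun_apply (M a))" using op_inv_props(2) Minv a by blast
    ultimately have "b = b'" by (simp add: inj_on_def)
    then show "p = q" using pab qab aa by simp
  qed
  have "blinfun_apply (M (F t x)) (blinfun_apply (\<Gamma> t x) y) = blinfun_apply (op_exp (t *\<^sub>R B0) o\<^sub>L M x) y"
    using Gdef op_inv_props(1)[of "M (F t x)"] Minv FxD by simp
  then have "(\<lambda>(x', y'). (h x', blinfun_apply (M x') y')) (F t x, blinfun_apply (\<Gamma> t x) y) =
      (blinfun_apply (op_exp (t *\<^sub>R A)) (h x), blinfun_apply (op_exp (t *\<^sub>R B0) o\<^sub>L M x) y)"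
    using hF by simp
  note e = this
  have mem: "(F t x, blinfun_apply (\<Gamma> t x) y) \<in> D \<times> (UNIV :: 'y set)" using FxD by simp
  show "(F t x, blinfun_apply (\<Gamma> t x) y) =
                inv_into (D \<times> UNIV) (\<lambda>(x', y'). (h x', blinfun_apply (M x') y'))
                  (blinfun_apply (op_exp (t *\<^sub>R A)) (h x),
                   blinfun_apply (op_exp (t *\<^sub>R B0) o\<^sub>L M x) y)"
    using inv_into_f_eq[OF injt mem e] by simp
qed

end
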